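(* Let $K$ be a field of characteristic $\neq2$ with involution $a\mapsto\bar a$, let $\varepsilon\in\{1,-1\}$ with $\varepsilon=1$ if the involution is nonidentity, and let $\Phi$ be an $n\times n$ Frobenius block with characteristic polynomial $\chi(x)$. A nonsingular matrix $X$ with $X=X^*$ and $X\Phi=\varepsilon(X\Phi)^*$ exists if and only if (B1) $\chi(x)=\varepsilon^n\bar\chi(\varepsilon x)$, and (B2) $\chi(x)\notin\{x^2,x^4,x^6,\dots\}$ if $\varepsilon=-1$. When these hold, one can take $X=[\varepsilon^ia_{i+j}]_{i,j=1}^n$, where $(a_2,a_3,\dots,a_{2n})$ is the $\chi$-recurrent sequence determined by $(a_2,\dots,a_{n+1})=(1,0,\dots,0)$ if $\Phi$ is nonsingular and $(a_2,\dots,a_{n+1})=(0,\dots,0,1)$ if $\Phi$ is singular.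
   Context: $M^*=[\bar m_{ji}]$ for $M=[m_{ij}]$. For $f=a_0x^n+\dots+a_n$, $\bar f=\bar a_0x^n+\dots+\bar a_n$. A Frobenius block is an $n\times n$ matrix with ones on the subdiagonal, last column $(-c_n,\dots,-c_1)^T$, zeros elsewhere, and characteristic polynomial $x^n+c_1x^{n-1}+\dots+c_n$ a power of an irreducible polynomial. For $f(x)=\gamma_0x^m+\dots+\gamma_m$, a sequence $(a_q,\dots,a_r)$ is $f$-recurrent if $\gamma_0a_{l+m}+\gamma_1a_{l+m-1}+\dots+\gamma_ma_l=0$ for $q\le l\le r-m$. *)

theory Defs
  imports "Jordan_Normal_Form.Char_Poly" "HOL-Computational_Algebra.Polynomial_Factorial"
begin

definition is_involution :: "('a::field \<Rightarrow> 'a) \<Rightarrow> bool" where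
  "is_involution cj \<longleftrightarrow> (\<forall>a b. cj (a + b) = cj a + cj b) \<and> (\<forall>a b. cj (a * b) = cj a * cj b)
      \<and> (\<forall>a. cj (cj a) = a)"

definition star_mat :: "('a \<Rightarrow> 'a) \<Rightarrow> 'a mat \<Rightarrow> 'a mat" where
  "star_mat cj M = mat (dim_col M) (dim_row M) (\<lambda>(i, j). cj (M $$ (j, i)))"

definition bar_poly :: "('a::zero \<Rightarrow> 'a) \<Rightarrow> 'a poly \<Rightarrow> 'a poly" where
  "bar_poly cj f = map_poly cj f"

text \<open>The n x n companion-type matrix with ones on the subdiagonal and last column
  (-c_n, ..., -c_1)^T (0-indexed: entry (i, n-1) is -c_(n-i)).\<close>
definition frobenius_mat :: "nat \<Rightarrow> (nat \<Rightarrow> 'a::comm_ring_1) \<Rightarrow> 'a mat" where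
  "frobenius_mat n c = mat n n (\<lambda>(i, j).
      (if j = n - 1 then - c (n - i) else 0) + (if i = j + 1 then 1 else 0))"

definition frobenius_block :: "nat \<Rightarrow> 'a::field mat \<Rightarrow> bool" where
  "frobenius_block n \<Phi> \<longleftrightarrow> n \<ge> 1 \<and> (\<exists>c. \<Phi> = frobenius_mat n c) \<and>
      (\<exists>p k. irreducible p \<and> char_poly \<Phi> = p ^ k)"

definition recurrent :: "'a::comm_ring_1 poly \<Rightarrow> (nat \<Rightarrow> 'a) \<Rightarrow> nat \<Rightarrow> nat \<Rightarrow> bool" where
  "recurrent f a q r \<longleftrightarrow> (\<forall>l. q \<le> l \<and> l + degree f \<le> r \<longrightarrow>
      (\<Sum>i = 0..degree f. coeff f (degree f - i) * a (l + degree f - i)) = 0)"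

end

theory Submission
  imports Defs
begin

definition cpoly :: "nat \<Rightarrow> (nat \<Rightarrow> 'a::comm_ring_1) \<Rightarrow> 'a poly" where
  "cpoly m c = monom 1 m + (\<Sum>k=1..m. monom (c k) (m - k))"

lemma cpoly_Suc: "cpoly (Suc m) c = [:0,1:] * cpoly m c + [:c (Suc m):]"
proof -
  have "[:0,1:] * (\<Sum>k=1..m. monom (c k) (m - k)) = (\<Sum>k=1..m. monom (c k) (Suc m - k))"
    unfolding sum_distrib_left
    by (rule sum.cong, auto simp: x_pow_n[symmetric] monom_altdef Suc_diff_le)
  moreover have "(\<Sum>k=1..Suc m. monom (c k) (Suc m - k)) = (\<Sum>k=1..m. monom (c k) (Suc m - k)) + [:c (Suc m):]"
    by (simp add: monom_0)
  ultimately show ?thesis unfolding cpoly_def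
    by (simp add: algebra_simps x_pow_n[symmetric] monom_altdef)
qed

lemma char_poly_frob: "char_poly (frobenius_mat m c) = cpoly m c"
proof (induction m)
  case 0
  then show ?case by (simp add: char_poly_defs frobenius_mat_def cpoly_def det_def)
next
  case (Suc m)
  define M where "M = char_poly_matrix (frobenius_mat (Suc m) c)"
  have M: "M \<in> carrier_mat (Suc m) (Suc m)" unfolding M_def frobenius_mat_def by auto
  have M0: "M $$ (0,j) = (if j = 0 then [:0,1:] else 0) + (if j = m then [:c (Suc m):] else 0)"
    if "j < Suc m" for j
    using that unfolding M_def char_poly_matrix_def frobenius_mat_def by auto
  have d00: "mat_delete M 0 0 = char_poly_matrix (frobenius_mat m c)"
    by (rule eq_matI, auto simp: M_def mat_delete_def char_poly_matrix_def frobenius_mat_def)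
  have ut: "upper_triangular (mat_delete M 0 m)"
    unfolding upper_triangular_def
    by (auto simp: M_def mat_delete_def char_poly_matrix_def frobenius_mat_def)
  have dm: "det (mat_delete M 0 m) = (-1)^m"
  proof -
    have "det (mat_delete M 0 m) = prod_list (diag_mat (mat_delete M 0 m))"
      by (rule det_upper_triangular[OF ut], insert M, auto simp: mat_delete_def)
    also have "diag_mat (mat_delete M 0 m) = replicate m (-1)"
      by (rule nth_equalityI, auto simp: one_pCons diag_mat_def M_def mat_delete_def char_poly_matrix_def frobenius_mat_def)
    finally show ?thesis by simp
  qed
  have "det M = (\<Sum>j<Suc m. M $$ (0,j) * cofactor M 0 j)"
    by (rule laplace_expansion_row[OF M], simp)
  also have "\<dots> = (\<Sum>j<Suc m. (if j = 0 then [:0,1:] * cofactor M 0 0 else 0)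
       + (if j = m then [:c (Suc m):] * cofactor M 0 m else 0))"
    by (rule sum.cong, auto simp: M0 distrib_right)
  also have "\<dots> = [:0,1:] * cofactor M 0 0 + [:c (Suc m):] * cofactor M 0 m"
    by (simp add: sum.distrib)
  also have "cofactor M 0 0 = cpoly m c" unfolding cofactor_def d00 Suc[unfolded char_poly_def] by simp
  also have "cofactor M 0 m = 1" unfolding cofactor_def dm by (simp flip: power_mult_distrib)
  finally show ?case unfolding char_poly_def M_def cpoly_Suc by simp
qed

lemma sum_single: "(p::nat) < n \<Longrightarrow> (\<And>j. j < n \<Longrightarrow> j \<noteq> p \<Longrightarrow> f j = 0) \<Longrightarrow> (\<Sum>j\<in>{0..<n}. f j) = f p"
proof -
  assume p: "p < n" and z: "\<And>j. j < n \<Longrightarrow> j \<noteq> p \<Longrightarrow> f j = 0"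
  have "sum f {0..<n} = f p + sum f ({0..<n} - {p})" by (rule sum.remove, insert p, auto)
  also have "sum f ({0..<n} - {p}) = 0" by (rule sum.neutral, insert z, auto)
  finally show ?thesis by simp
qed

lemma eps_pow: assumes "(\<epsilon>::'a::comm_ring_1) * \<epsilon> = 1" shows "\<epsilon> ^ k = (if even k then 1 else \<epsilon>)"
proof (induction k)
  case (Suc k) then show ?case using assms by auto
qed simp

lemma sum_atMost_split: "(\<Sum>k\<le>(n::nat). f k) = (\<Sum>k<n. f k) + (f n :: 'a::comm_monoid_add)"
  by (metis lessThan_Suc_atMost sum.lessThan_Suc)

lemma rec_unique:
  fixes g u v :: "nat \<Rightarrow> 'a::comm_ring_1"
  assumes gn: "g n = 1"
    and init: "\<And>s. 2 \<le> s \<Longrightarrow> s \<le> n + 1 \<Longrightarrow> u s = v s"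
    and ru: "\<And>l. 2 \<le> l \<Longrightarrow> l \<le> N \<Longrightarrow> (\<Sum>k\<le>n. g k * u (l + k)) = 0"
    and rv: "\<And>l. 2 \<le> l \<Longrightarrow> l \<le> N \<Longrightarrow> (\<Sum>k\<le>n. g k * v (l + k)) = 0"
  shows "2 \<le> s \<Longrightarrow> s \<le> N + n \<Longrightarrow> u s = v s"
proof (induction s rule: less_induct)
  case (less s)
  show ?case
  proof (cases "s \<le> n + 1")
    case True then show ?thesis using init less by auto
  next
    case False
    define l where "l = s - n"
    have l: "2 \<le> l" "l \<le> N" "s = l + n" using False less(3) unfolding l_def by auto
    have "u (l+n) + (\<Sum>k<n. g k * u (l + k)) = 0" using ru[OF l(1,2)] gn
      by (simp add: sum_atMost_split add.commute)
    then have "u s = - (\<Sum>k<n. g k * u (l + k))" using l(3) by (simp add: eq_neg_iff_add_eq_0)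
    also have "(\<Sum>k<n. g k * u (l + k)) = (\<Sum>k<n. g k * v (l + k))"
      by (rule sum.cong, auto intro!: arg_cong[of _ _ "\<lambda>x. _ * x"] less(1) simp: l, insert l, auto)
    also have "v (l+n) + (\<Sum>k<n. g k * v (l + k)) = 0" using rv[OF l(1,2)] gn
      by (simp add: sum_atMost_split add.commute)
    then have "- (\<Sum>k<n. g k * v (l + k)) = v s" using l(3) by (simp add: neg_eq_iff_add_eq_0 add.commute)
    finally show ?thesis .
  qed
qed

lemma part2:
  fixes cj :: "'a::field \<Rightarrow> 'a" and \<epsilon> :: 'a and g a :: "nat \<Rightarrow> 'a" and n :: nat
  assumes hom: "comm_ring_hom cj"
    and eps2: "\<epsilon> * \<epsilon> = 1" and cjeps: "cj \<epsilon> = \<epsilon>"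
    and n: "n \<ge> 1" and gn: "g n = 1"
    and B1: "\<And>k. g k = \<epsilon>^(n+k) * cj (g k)"
    and rec: "\<And>l. 2 \<le> l \<Longrightarrow> l \<le> n \<Longrightarrow> (\<Sum>k\<le>n. g k * a (l+k)) = 0"
    and init: "(g 0 \<noteq> 0 \<and> (\<forall>s\<in>{2..n+1}. a s = (if s = 2 then 1 else 0)))
             \<or> (\<epsilon>^(n+1) = 1 \<and> (\<forall>s\<in>{2..n+1}. a s = (if s = n+1 then 1 else 0)))"
    and Phi: "\<Phi> = mat n n (\<lambda>(i,j). (if j = n-1 then - g i else 0) + (if i = j+1 then 1 else 0))"
    and X: "X = mat n n (\<lambda>(i,j). \<epsilon>^(i+1) * a (i+j+2))"
  shows "det X \<noteq> 0 \<and> X = star_mat cj X \<and> X * \<Phi> = \<epsilon> \<cdot>\<^sub>m star_mat cj (X * \<Phi>)"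
proof -
  interpret cj: comm_ring_hom cj by fact
  note ep = eps_pow[OF eps2]
  define b where "b s = (if s \<le> 2*n then a s else - (\<Sum>k<n. g k * a (n+1+k)))" for s
  have rb: "(\<Sum>k\<le>n. g k * b (l+k)) = 0" if "2 \<le> l" "l \<le> n+1" for l
  proof (cases "l \<le> n")
    case True
    then have "(\<Sum>k\<le>n. g k * b (l+k)) = (\<Sum>k\<le>n. g k * a (l+k))" by (intro sum.cong, auto simp: b_def)
    then show ?thesis using rec[OF that(1) True] by simp
  next
    case False
    then have l: "l = n+1" using that by auto
    have "(\<Sum>k\<le>n. g k * b (l+k)) = (\<Sum>k<n. g k * b (l+k)) + b (l+n)" using gn by (simp add: sum_atMost_split)
    also have "(\<Sum>k<n. g k * b (l+k)) = (\<Sum>k<n. g k * a (n+1+k))" by (intro sum.cong, auto simp: b_def l)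
    also have "b (l+n) = - (\<Sum>k<n. g k * a (n+1+k))" using n by (simp add: b_def l)
    finally show ?thesis by simp
  qed
  define d where "d s = \<epsilon>^s * cj (b s)" for s
  have rd: "(\<Sum>k\<le>n. g k * d (l+k)) = 0" if "2 \<le> l" "l \<le> n+1" for l
  proof -
    have "(\<Sum>k\<le>n. g k * d (l+k)) = (\<Sum>k\<le>n. \<epsilon>^(n+l) * cj (g k * b (l+k)))"
    proof (rule sum.cong[OF refl])
      fix k
      have "g k * d (l+k) = \<epsilon>^(n+k) * cj (g k) * d (l+k)" by (subst B1, simp)
      also have "\<dots> = (\<epsilon>^(n+k) * \<epsilon>^(l+k)) * (cj (g k) * cj (b (l+k)))"
        by (simp add: d_def algebra_simps)
      also have "\<epsilon>^(n+k) * \<epsilon>^(l+k) = \<epsilon>^(n+l)" by (simp add: ep eps2)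
      finally show "g k * d (l+k) = \<epsilon>^(n+l) * cj (g k * b (l+k))" by (simp add: cj.hom_mult)
    qed
    also have "\<dots> = \<epsilon>^(n+l) * cj (\<Sum>k\<le>n. g k * b (l+k))" by (simp add: cj.hom_sum sum_distrib_left)
    also have "\<dots> = 0" using rb[OF that] by simp
    finally show ?thesis .
  qed
  have init_db: "d s = b s" if "2 \<le> s" "s \<le> n+1" for s
  proof -
    have bs: "b s = a s" using that n by (simp add: b_def)
    from init show ?thesis
    proof
      assume "g 0 \<noteq> 0 \<and> (\<forall>s\<in>{2..n+1}. a s = (if s = 2 then 1 else 0))"
      then have "a s = (if s = 2 then 1 else 0)" using that by auto
      then show ?thesis unfolding d_def bs by (auto simp: ep)
    next
      assume "\<epsilon>^(n+1) = 1 \<and> (\<forall>s\<in>{2..n+1}. a s = (if s = n+1 then 1 else 0))"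
      then have "a s = (if s = n+1 then 1 else 0)" "\<epsilon>^(n+1) = 1" using that by auto
      then show ?thesis unfolding d_def bs by auto
    qed
  qed
  have db: "d s = b s" if "2 \<le> s" "s \<le> 2*n+1" for s
    by (rule rec_unique[of g n d b "n+1"], insert gn init_db rd rb that, auto)
  have K: "cj (b s) = \<epsilon>^s * b s" if "2 \<le> s" "s \<le> 2*n+1" for s
  proof -
    have ee: "\<epsilon>^s * \<epsilon>^s = 1" by (simp add: ep eps2)
    from db[OF that] have "\<epsilon>^s * cj (b s) = b s" by (simp add: d_def)
    then have "\<epsilon>^s * (\<epsilon>^s * cj (b s)) = \<epsilon>^s * b s" by simp
    then show ?thesis using ee by (simp add: mult.assoc[symmetric])
  qed
  have cjp: "cj (\<epsilon>^k) = \<epsilon>^k" for k by (simp add: cj.hom_power cjeps)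
  have Xc: "X \<in> carrier_mat n n" by (simp add: X)
  have Pc: "\<Phi> \<in> carrier_mat n n" by (simp add: Phi)
  have ab: "a s = b s" if "s \<le> 2*n" for s using that by (simp add: b_def)
  have herm: "X = star_mat cj X"
  proof (rule eq_matI)
    fix i j assume ij: "i < dim_row (star_mat cj X)" "j < dim_col (star_mat cj X)"
    then have ij: "i < n" "j < n" by (auto simp: star_mat_def X)
    have s: "i+j+2 \<le> 2*n" using ij by auto
    have "star_mat cj X $$ (i,j) = \<epsilon>^(j+1) * cj (b (i+j+2))"
      using ij s by (simp add: star_mat_def X cj.hom_mult cjp cjeps b_def add.commute add.left_commute)
    also have "\<dots> = (\<epsilon>^(j+1) * \<epsilon>^(i+j+2)) * b (i+j+2)" using s by (simp add: K)
    also have "\<epsilon>^(j+1) * \<epsilon>^(i+j+2) = \<epsilon>^(i+1)" by (simp add: ep eps2)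
    finally show "X $$ (i,j) = star_mat cj X $$ (i,j)" using ij s by (simp add: X b_def)
  qed (auto simp: star_mat_def X)
  have XP: "(X * \<Phi>) $$ (i,j) = \<epsilon>^(i+1) * b (i+j+3)" if ij: "i<n" "j<n" for i j
  proof -
    have "(X*\<Phi>) $$ (i,j) = (\<Sum>k\<in>{0..<n}. X $$ (i,k) * \<Phi> $$ (k,j))"
      using ij Xc Pc by (simp add: scalar_prod_def)
    also have "\<dots> = (\<Sum>k\<in>{0..<n}. \<epsilon>^(i+1) * a (i+k+2) * ((if j = n-1 then - g k else 0) + (if k = j+1 then 1 else 0)))"
      using ij by (intro sum.cong, auto simp: X Phi)
    also have "\<dots> = \<epsilon>^(i+1) * b (i+j+3)"
    proof (cases "j = n-1")
      case False
      then have "j + 1 < n" using ij by auto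
      then have "(\<Sum>k\<in>{0..<n}. \<epsilon>^(i+1) * a (i+k+2) * ((if j = n-1 then - g k else 0) + (if k = j+1 then 1 else 0)))
          = \<epsilon>^(i+1) * a (i+(j+1)+2) * ((if j = n-1 then - g (j+1) else 0) + (if j+1 = j+1 then 1 else 0))"
        by (intro sum_single, auto)
      also have "\<dots> = \<epsilon>^(i+1) * b (i+j+3)" using False ij \<open>j+1<n\<close> by (simp add: b_def eval_nat_numeral)
      finally show ?thesis .
    next
      case True
      have "(\<Sum>k\<in>{0..<n}. \<epsilon>^(i+1) * a (i+k+2) * ((if j = n-1 then - g k else 0) + (if k = j+1 then 1 else 0)))
          = (- (\<epsilon>^(i+1))) * (\<Sum>k<n. g k * b (i+2+k))"
        unfolding sum_distrib_left atLeast0LessThan using True ij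
        by (intro sum.cong, auto simp: ab)
      also have "(\<Sum>k<n. g k * b (i+2+k)) = - b (i+2+n)"
        using rb[of "i+2"] ij gn by (simp add: sum_atMost_split eq_neg_iff_add_eq_0)
      finally show ?thesis using True ij by (simp add: add.commute add.left_commute)
    qed
    finally show ?thesis .
  qed
  have skew: "X * \<Phi> = \<epsilon> \<cdot>\<^sub>m star_mat cj (X * \<Phi>)"
  proof (rule eq_matI)
    fix i j assume "i < dim_row (\<epsilon> \<cdot>\<^sub>m star_mat cj (X * \<Phi>))" "j < dim_col (\<epsilon> \<cdot>\<^sub>m star_mat cj (X * \<Phi>))"
    then have ij: "i < n" "j < n" using Xc Pc by (auto simp: star_mat_def)
    have s: "2 \<le> i+j+3" "i+j+3 \<le> 2*n+1" using ij by auto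
    have "(\<epsilon> \<cdot>\<^sub>m star_mat cj (X * \<Phi>)) $$ (i,j) = \<epsilon> * cj ((X * \<Phi>) $$ (j,i))"
      using ij Xc Pc by (simp add: star_mat_def del: index_mult_mat(1))
    also have "\<dots> = \<epsilon> * cj (\<epsilon>^(j+1) * b (j+i+3))" by (simp only: XP[OF ij(2,1)])
    also have "\<dots> = (\<epsilon> * \<epsilon>^(j+1) * \<epsilon>^(i+j+3)) * b (i+j+3)"
      using K[OF s] by (simp add: cj.hom_mult cjp cjeps add.commute add.left_commute mult.assoc)
    also have "\<epsilon> * \<epsilon>^(j+1) * \<epsilon>^(i+j+3) = \<epsilon>^(i+1)" by (simp add: ep eps2)
    finally show "(X * \<Phi>) $$ (i,j) = (\<epsilon> \<cdot>\<^sub>m star_mat cj (X * \<Phi>)) $$ (i,j)" using ij by (simp only: XP)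
  qed (insert Xc Pc, auto simp: star_mat_def)
  have nonsing: "det X \<noteq> 0"
  proof
    assume "det X = 0"
    then obtain v where v: "v \<in> carrier_vec n" "v \<noteq> 0\<^sub>v n" "X *\<^sub>v v = 0\<^sub>v n"
      using det_0_iff_vec_prod_zero_field[OF Xc] by auto
    have R: "(\<Sum>j\<in>{0..<n}. b (i+j+2) * v $ j) = 0" if i: "i < n" for i
    proof -
      have "0 = (X *\<^sub>v v) $ i" using v i by simp
      also have "\<dots> = (\<Sum>j\<in>{0..<n}. X $$ (i,j) * v $ j)" using v(1) i Xc by (simp add: scalar_prod_def)
      also have "\<dots> = \<epsilon>^(i+1) * (\<Sum>j\<in>{0..<n}. b (i+j+2) * v $ j)"
        unfolding sum_distrib_left using i by (intro sum.cong, auto simp: X ab mult.assoc)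
      finally have "\<epsilon>^(i+1) * (\<Sum>j\<in>{0..<n}. b (i+j+2) * v $ j) = 0" by simp
      moreover have "\<epsilon>^(i+1) \<noteq> 0" using eps2 by auto
      ultimately show ?thesis by simp
    qed
    have allz: "\<forall>j<n. v $ j = 0"
      using init
    proof
      assume A: "g 0 \<noteq> 0 \<and> (\<forall>s\<in>{2..n+1}. a s = (if s = 2 then 1 else 0))"
      have bs: "b s = (if s = 2 then 1 else 0)" if "2 \<le> s" "s \<le> n+1" for s
        using A that n by (simp add: b_def)
      have bn2: "b (n+2) = - g 0"
      proof -
        have "0 = (\<Sum>k<n. g k * b (2+k)) + b (2+n)" using rb[of 2] n gn by (simp add: sum_atMost_split)
        also have "(\<Sum>k<n. g k * b (2+k)) = g 0 * b (2+0)"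
          unfolding atLeast0LessThan[symmetric] using n by (intro sum_single, auto simp: bs)
        finally show ?thesis using bs[of 2] n by (simp add: eq_neg_iff_add_eq_0 add.commute numeral_2_eq_2)
      qed
      have v0: "v $ 0 = 0"
      proof -
        have "(\<Sum>j\<in>{0..<n}. b (0+j+2) * v $ j) = b (0+0+2) * v $ 0"
          using n by (intro sum_single, auto simp: bs)
        then show ?thesis using R[of 0] n bs[of 2] by (simp add: numeral_2_eq_2)
      qed
      have vt: "1 \<le> t \<Longrightarrow> t < n \<Longrightarrow> v $ (n - t) = 0" for t
      proof (induction t rule: less_induct)
        case (less t)
        have "(\<Sum>j\<in>{0..<n}. b (t+j+2) * v $ j) = b (t+(n-t)+2) * v $ (n-t)"
        proof (rule sum_single)
          fix j assume j: "j < n" "j \<noteq> n - t"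
          show "b (t+j+2) * v $ j = 0"
          proof (cases "j < n - t")
            case True then show ?thesis using less by (simp add: bs)
          next
            case False
            then have "v $ (n - (n - j)) = 0" using j less by (intro less(1), auto)
            then show ?thesis using False j by simp
          qed
        qed (insert less, auto)
        then have "b (n+2) * v $ (n-t) = 0" using R[of t] less by simp
        then show ?case using bn2 A by simp
      qed
      show ?thesis
      proof (intro allI impI)
        fix j assume j: "j < n"
        show "v $ j = 0"
        proof (cases "j = 0")
          case True then show ?thesis using v0 by simp
        next
          case False then show ?thesis using vt[of "n-j"] j by simp
        qed
      qed
    next
      assume A: "\<epsilon>^(n+1) = 1 \<and> (\<forall>s\<in>{2..n+1}. a s = (if s = n+1 then 1 else 0))"
      have bs: "b s = (if s = n+1 then 1 else 0)" if "2 \<le> s" "s \<le> n+1" for s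
        using A that n by (simp add: b_def)
      have vt: "t < n \<Longrightarrow> v $ (n - 1 - t) = 0" for t
      proof (induction t rule: less_induct)
        case (less t)
        have "(\<Sum>j\<in>{0..<n}. b (t+j+2) * v $ j) = b (t+(n-1-t)+2) * v $ (n-1-t)"
        proof (rule sum_single)
          fix j assume j: "j < n" "j \<noteq> n - 1 - t"
          show "b (t+j+2) * v $ j = 0"
          proof (cases "j < n - 1 - t")
            case True then show ?thesis using less by (simp add: bs)
          next
            case False
            then have "v $ (n - 1 - (n - 1 - j)) = 0" using j less by (intro less(1), auto)
            then show ?thesis using False j by simp
          qed
        qed (insert less, auto)
        then show ?case using R[of t] less bs[of "n+1"] n by simp
      qed
      show ?thesis
      proof (intro allI impI)
        fix j assume j: "j < n"
        then show "v $ j = 0" using vt[of "n-1-j"] by simp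
      qed
    qed
    then have "v = 0\<^sub>v n" using v by (intro eq_vecI, auto)
    then show False using v by simp
  qed
  show ?thesis using nonsing herm skew by simp
qed

lemma inv_hom: assumes "is_involution (cj :: 'a::field \<Rightarrow> 'a)" shows "comm_ring_hom cj"
proof -
  have add: "cj (a + b) = cj a + cj b" and mul: "cj (a * b) = cj a * cj b" and ii: "cj (cj a) = a" for a b
    using assms unfolding is_involution_def by auto
  have z: "cj 0 = 0" using add[of 0 0] by (metis add.right_neutral add_left_cancel)
  have "cj 1 \<noteq> 0"
  proof
    assume "cj 1 = 0"
    then have "cj a = 0" for a using mul[of a 1] by simp
    then have "(1::'a) = 0" using ii[of 1] z by simp
    then show False by simp
  qed
  moreover have "cj 1 = cj 1 * cj 1" using mul[of 1 1] by simp
  ultimately have o: "cj 1 = 1" by (metis mult_cancel_left1)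
  show ?thesis by (unfold_locales, auto simp: add mul o z)
qed

lemma coeff_cpoly_n: "coeff (cpoly m c) m = 1"
  unfolding cpoly_def by (simp add: coeff_sum, rule sum.neutral, auto)

lemma coeff_cpoly_lt: assumes "j < m" shows "coeff (cpoly m c) j = c (m - j)"
proof -
  have "coeff (cpoly m c) j = (\<Sum>k=1..m. if m - k = j then c k else 0)"
    unfolding cpoly_def using assms by (simp add: coeff_sum coeff_monom)
  also have "\<dots> = (\<Sum>k\<in>{m-j}. c k)" by (rule sum.mono_neutral_cong_right, insert assms, auto)
  finally show ?thesis by simp
qed

lemma char_poly_smult_eps:
  assumes A: "(A :: 'a :: comm_ring_1 mat) \<in> carrier_mat n n" and e: "e * e = 1"
  shows "char_poly (e \<cdot>\<^sub>m A) = Polynomial.smult (e^n) (pcompose (char_poly A) [:0,e:])"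
proof -
  have pc: "comm_ring_hom (\<lambda>q. pcompose q [:0,e:])"
    by (unfold_locales, auto simp: pcompose_add pcompose_mult pcompose_1)
  have "char_poly_matrix (e \<cdot>\<^sub>m A) = [:e:] \<cdot>\<^sub>m map_mat (\<lambda>q. pcompose q [:0,e:]) (char_poly_matrix A)"
    by (rule eq_matI, insert A e, auto simp: char_poly_matrix_def pcompose_pCons smult_add_right)
  then have "char_poly (e \<cdot>\<^sub>m A) = [:e:]^n * pcompose (char_poly A) [:0,e:]"
    unfolding char_poly_def using A by (simp add: comm_ring_hom.hom_det[OF pc] char_poly_matrix_def)
  then show ?thesis by (simp add: poly_const_pow)
qed

function recseq :: "nat \<Rightarrow> (nat \<Rightarrow> 'a::comm_ring_1) \<Rightarrow> (nat \<Rightarrow> 'a) \<Rightarrow> nat \<Rightarrow> 'a" where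
  "recseq n g f s = (if s \<le> n + 1 then f s else - (\<Sum>k<n. g k * recseq n g f (s - n + k)))"
  by pat_completeness auto
termination by (relation "measure (\<lambda>(n,g,f,s). s)") auto

declare recseq.simps[simp del]

lemma recseq_rec: assumes "g n = 1" "2 \<le> l" shows "(\<Sum>k\<le>n. g k * recseq n g f (l+k)) = 0"
proof -
  have "recseq n g f (l+n) = - (\<Sum>k<n. g k * recseq n g f (l+k))"
    using assms by (subst recseq.simps, simp)
  then show ?thesis using assms by (simp add: sum_atMost_split)
qed

lemma recseq_init: "s \<le> n + 1 \<Longrightarrow> recseq n g f s = f s"
  by (subst recseq.simps, simp)

lemma recurrent_conv: assumes "degree f = n"
  shows "recurrent f a q r \<longleftrightarrow> (\<forall>l. q \<le> l \<and> l + n \<le> r \<longrightarrow> (\<Sum>k\<le>n. coeff f k * a (l+k)) = 0)"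
proof -
  have "(\<Sum>i = 0..n. coeff f (n - i) * a (l + n - i)) = (\<Sum>k\<le>n. coeff f k * a (l+k))" for l
  proof -
    have "(\<Sum>k\<le>n. coeff f k * a (l+k)) = (\<Sum>k=0..n. coeff f k * a (l+k))" by (simp add: atLeast0AtMost)
    also have "\<dots> = (\<Sum>i=0..n. coeff f (n + 0 - i) * a (l + (n + 0 - i)))" by (rule sum.atLeastAtMost_rev)
    also have "\<dots> = (\<Sum>i = 0..n. coeff f (n - i) * a (l + n - i))" by (rule sum.cong, auto)
    finally show ?thesis by simp
  qed
  then show ?thesis unfolding recurrent_def assms by simp
qed

lemma chi_monom:
  fixes \<chi> p :: "'a::field poly"
  assumes irr: "irreducible p" and chi: "\<chi> = p ^ k" and deg: "degree \<chi> = n"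
    and lc: "coeff \<chi> n = 1" and z: "coeff \<chi> 0 = 0"
  shows "\<chi> = monom 1 n"
proof -
  have k: "k \<noteq> 0" using z chi by (cases k, auto)
  have "poly \<chi> 0 = 0" using z by (simp add: poly_0_coeff_0)
  then have "poly p 0 = 0" using chi by (simp add: poly_power)
  then have "[:0,1:] dvd p" using poly_eq_0_iff_dvd[of p 0] by simp
  then obtain u where pu: "p = [:0,1:] * u" by (auto elim: dvdE)
  have nu: "\<not> [:0,1::'a:] dvd 1" by (auto simp: is_unit_poly_iff)
  from irreducibleD[OF irr pu] nu have "u dvd 1" by auto
  then obtain u0 where u0: "u = [:u0:]" "u0 dvd 1" by (metis is_unit_poly_iff)
  then have u0n: "u0 \<noteq> 0" by auto
  have "p = monom u0 1" using pu u0 by (simp add: monom_altdef)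
  then have c: "\<chi> = monom (u0^k) k" using chi by (simp add: monom_power)
  then have "k = n" using deg u0n by (simp add: degree_monom_eq)
  then show ?thesis using c lc by simp
qed

lemma star_mat_alt: "star_mat cj M = transpose_mat (map_mat cj M)"
  by (rule eq_matI, auto simp: star_mat_def)

theorem theorem8:
  fixes cj :: "'a::field \<Rightarrow> 'a" and \<epsilon> :: 'a and \<Phi> :: "'a mat" and n :: nat
  assumes char: "(2::'a) \<noteq> 0"
    and inv: "is_involution cj"
    and eps: "\<epsilon> = 1 \<or> \<epsilon> = -1"
    and eps_nonid: "(\<exists>a. cj a \<noteq> a) \<longrightarrow> \<epsilon> = 1"
    and frob: "frobenius_block n \<Phi>"
  shows "((\<exists>X \<in> carrier_mat n n. det X \<noteq> 0 \<and> X = star_mat cj X \<and>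
              X * \<Phi> = \<epsilon> \<cdot>\<^sub>m star_mat cj (X * \<Phi>))
          \<longleftrightarrow> (char_poly \<Phi> = Polynomial.smult (\<epsilon> ^ n) (pcompose (bar_poly cj (char_poly \<Phi>)) [:0, \<epsilon>:])
               \<and> (\<epsilon> = -1 \<longrightarrow> char_poly \<Phi> \<notin> {monom 1 (2 * k) | k. k \<ge> 1})))
       \<and> ((char_poly \<Phi> = Polynomial.smult (\<epsilon> ^ n) (pcompose (bar_poly cj (char_poly \<Phi>)) [:0, \<epsilon>:])
               \<and> (\<epsilon> = -1 \<longrightarrow> char_poly \<Phi> \<notin> {monom 1 (2 * k) | k. k \<ge> 1}))
          \<longrightarrow> (\<forall>a :: nat \<Rightarrow> 'a.
                recurrent (char_poly \<Phi>) a 2 (2 * n)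
                \<and> (\<forall>i \<in> {2..n+1}. a i = (if det \<Phi> \<noteq> 0 then (if i = 2 then 1 else 0)
                                                       else (if i = n + 1 then 1 else 0)))
                \<longrightarrow> (let X = mat n n (\<lambda>(i, j). \<epsilon> ^ (i + 1) * a (i + j + 2)) in
                      det X \<noteq> 0 \<and> X = star_mat cj X \<and>
                      X * \<Phi> = \<epsilon> \<cdot>\<^sub>m star_mat cj (X * \<Phi>))))"
proof -
  from frob obtain c p k where n1: "n \<ge> 1" and Phi_c: "\<Phi> = frobenius_mat n c"
    and irr: "irreducible p" and pk: "char_poly \<Phi> = p ^ k"
    unfolding frobenius_block_def by blast
  define \<chi> where "\<chi> = char_poly \<Phi>"
  have Pc: "\<Phi> \<in> carrier_mat n n" unfolding Phi_c frobenius_mat_def by simp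
  have chi: "\<chi> = cpoly n c" unfolding \<chi>_def Phi_c by (rule char_poly_frob)
  have dm: "degree \<chi> = n" "coeff \<chi> n = 1" using degree_monic_char_poly[OF Pc] \<chi>_def by auto
  define g where "g = coeff \<chi>"
  have gn: "g n = 1" using dm g_def by simp
  have glt: "g i = c (n - i)" if "i < n" for i using that by (simp add: g_def chi coeff_cpoly_lt)
  have Phi': "\<Phi> = mat n n (\<lambda>(i,j). (if j = n-1 then - g i else 0) + (if i = j+1 then 1 else 0))"
    by (rule eq_matI, auto simp: Phi_c frobenius_mat_def glt)
  have hom: "comm_ring_hom cj" by (rule inv_hom[OF inv])
  interpret cj: comm_ring_hom cj by fact
  have eps2: "\<epsilon> * \<epsilon> = 1" using eps by auto
  have cjeps: "cj \<epsilon> = \<epsilon>" using eps by (auto simp: cj.hom_uminus)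
  have m1: "(-1::'a) \<noteq> 1"
  proof
    assume "(-1::'a) = 1"
    then have "(1::'a) + 1 = 0" by (metis neg_eq_iff_add_eq_0)
    then show False using char by simp
  qed
  have cjid: "cj x = x" if "\<epsilon> = -1" for x using eps_nonid that m1 by auto
  have ep: "\<epsilon>^j = (if even j then 1 else \<epsilon>)" for j by (rule eps_pow[OF eps2])
  have detg: "det \<Phi> \<noteq> 0 \<longleftrightarrow> g 0 \<noteq> 0"
  proof -
    have "poly \<chi> 0 = det (- char_matrix \<Phi> 0)" unfolding \<chi>_def by (rule char_poly_matrix[OF Pc])
    also have "- char_matrix \<Phi> 0 = (-1) \<cdot>\<^sub>m \<Phi>" by (rule eq_matI, insert Pc, auto simp: char_matrix_def)
    also have "det ((-1) \<cdot>\<^sub>m \<Phi>) = (-1)^n * det \<Phi>" using Pc by simp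
    finally show ?thesis by (simp add: g_def poly_0_coeff_0)
  qed
  have B1c: "g j = \<epsilon>^(n+j) * cj (g j)"
    if B1: "\<chi> = Polynomial.smult (\<epsilon>^n) (pcompose (bar_poly cj \<chi>) [:0,\<epsilon>:])" for j
  proof -
    have "g j = coeff \<chi> j" by (simp add: g_def)
    also have "\<dots> = \<epsilon>^n * (\<epsilon>^j * cj (g j))"
      by (subst B1, simp add: coeff_pcompose_linear bar_poly_def coeff_map_poly g_def)
    finally show ?thesis by (simp add: power_add mult.assoc)
  qed
  have sing_eps: "\<epsilon>^(n+1) = 1"
    if B2: "\<epsilon> = -1 \<longrightarrow> \<chi> \<notin> {monom 1 (2*k) | k. k \<ge> 1}" and g0: "g 0 = 0"
  proof (cases "\<epsilon> = 1")
    case True then show ?thesis by simp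
  next
    case False
    then have em: "\<epsilon> = -1" using eps by auto
    have cm: "\<chi> = monom 1 n" by (rule chi_monom[OF irr pk[folded \<chi>_def] dm(1) dm(2)], use g0 g_def in simp)
    have "odd n"
    proof
      assume "even n"
      then obtain m where "n = 2 * m" by (auto elim!: evenE)
      then show False using B2 em n1 cm by auto
    qed
    then show ?thesis by (simp add: ep eps2)
  qed
  have part2': "let X = mat n n (\<lambda>(i, j). \<epsilon> ^ (i + 1) * a (i + j + 2)) in
                      det X \<noteq> 0 \<and> X = star_mat cj X \<and> X * \<Phi> = \<epsilon> \<cdot>\<^sub>m star_mat cj (X * \<Phi>)"
    if B: "\<chi> = Polynomial.smult (\<epsilon> ^ n) (pcompose (bar_poly cj \<chi>) [:0, \<epsilon>:])
               \<and> (\<epsilon> = -1 \<longrightarrow> \<chi> \<notin> {monom 1 (2 * k) | k. k \<ge> 1})"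
    and ra: "recurrent \<chi> a 2 (2 * n)"
    and ia: "\<forall>i \<in> {2..n+1}. a i = (if det \<Phi> \<noteq> 0 then (if i = 2 then 1 else 0)
                                                       else (if i = n + 1 then 1 else 0))" for a
  proof -
    have rec: "(\<Sum>k\<le>n. g k * a (l+k)) = 0" if "2 \<le> l" "l \<le> n" for l
      using ra that unfolding recurrent_conv[OF dm(1)] g_def by auto
    have B1k: "g j = \<epsilon>^(n+j) * cj (g j)" for j using B B1c by auto
    have init: "(g 0 \<noteq> 0 \<and> (\<forall>s\<in>{2..n+1}. a s = (if s = 2 then 1 else 0)))
             \<or> (\<epsilon>^(n+1) = 1 \<and> (\<forall>s\<in>{2..n+1}. a s = (if s = n+1 then 1 else 0)))"
    proof (cases "det \<Phi> \<noteq> 0")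
      case True then show ?thesis using ia detg by auto
    next
      case False then show ?thesis using ia detg sing_eps B by auto
    qed
    show ?thesis unfolding Let_def by (rule part2[OF hom eps2 cjeps n1 gn B1k rec init Phi' refl])
  qed
  have iff: "(\<exists>X \<in> carrier_mat n n. det X \<noteq> 0 \<and> X = star_mat cj X \<and>
              X * \<Phi> = \<epsilon> \<cdot>\<^sub>m star_mat cj (X * \<Phi>))
          \<longleftrightarrow> (\<chi> = Polynomial.smult (\<epsilon> ^ n) (pcompose (bar_poly cj \<chi>) [:0, \<epsilon>:])
               \<and> (\<epsilon> = -1 \<longrightarrow> \<chi> \<notin> {monom 1 (2 * k) | k. k \<ge> 1}))"
  proof
    assume "\<exists>X \<in> carrier_mat n n. det X \<noteq> 0 \<and> X = star_mat cj X \<and> X * \<Phi> = \<epsilon> \<cdot>\<^sub>m star_mat cj (X * \<Phi>)"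
    then obtain X where X: "X \<in> carrier_mat n n" "det X \<noteq> 0" "X = star_mat cj X"
      "X * \<Phi> = \<epsilon> \<cdot>\<^sub>m star_mat cj (X * \<Phi>)" by blast
    show "\<chi> = Polynomial.smult (\<epsilon> ^ n) (pcompose (bar_poly cj \<chi>) [:0, \<epsilon>:])
               \<and> (\<epsilon> = -1 \<longrightarrow> \<chi> \<notin> {monom 1 (2 * k) | k. k \<ge> 1})"
    proof
      have mX: "X \<in> Units (ring_mat TYPE('a) n undefined)" by (rule det_non_zero_imp_unit[OF X(1,2)])
      then obtain Q where Q: "Q \<in> carrier_mat n n" "Q * X = 1\<^sub>m n" "X * Q = 1\<^sub>m n"
        unfolding Units_def ring_mat_def by auto
      define S where "S = star_mat cj \<Phi>"
      have Sc: "S \<in> carrier_mat n n" using Pc by (simp add: S_def star_mat_def)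
      have st: "star_mat cj (X * \<Phi>) = S * X"
      proof -
        have "star_mat cj (X * \<Phi>) = transpose_mat (map_mat cj X * map_mat cj \<Phi>)"
          unfolding star_mat_alt by (simp add: cj.mat_hom_mult[OF X(1) Pc])
        also have "\<dots> = transpose_mat (map_mat cj \<Phi>) * transpose_mat (map_mat cj X)"
          by (rule transpose_mult, insert X(1) Pc, auto)
        also have "\<dots> = S * X" unfolding S_def star_mat_alt[symmetric] by (simp only: X(3)[symmetric])
        finally show ?thesis .
      qed
      have XP: "X * \<Phi> = (\<epsilon> \<cdot>\<^sub>m S) * X" unfolding mult_smult_assoc_mat[OF Sc X(1)] st[symmetric] by (rule X(4))
      have "X * \<Phi> * Q = (\<epsilon> \<cdot>\<^sub>m S) * X * Q" using XP by simp
      also have "\<dots> = (\<epsilon> \<cdot>\<^sub>m S) * (X * Q)" by (rule assoc_mult_mat, insert Sc X(1) Q, auto)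
      also have "\<dots> = \<epsilon> \<cdot>\<^sub>m S" using Q Sc by simp
      finally have eq: "\<epsilon> \<cdot>\<^sub>m S = X * \<Phi> * Q" by simp
      have "similar_mat (\<epsilon> \<cdot>\<^sub>m S) \<Phi>" unfolding similar_mat_def similar_mat_wit_def Let_def
        by (intro exI[of _ X] exI[of _ Q], insert Sc Pc X(1) Q eq, auto)
      then have "char_poly (\<epsilon> \<cdot>\<^sub>m S) = \<chi>" unfolding \<chi>_def by (rule char_poly_similar)
      moreover have "char_poly (\<epsilon> \<cdot>\<^sub>m S) = Polynomial.smult (\<epsilon>^n) (pcompose (char_poly S) [:0,\<epsilon>:])"
        by (rule char_poly_smult_eps[OF Sc eps2])
      moreover have "char_poly S = bar_poly cj \<chi>"
      proof -
        have "char_poly S = char_poly (map_mat cj \<Phi>)" unfolding S_def star_mat_alt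
          by (rule char_poly_transpose_mat, insert Pc, auto)
        also have "\<dots> = map_poly cj \<chi>" unfolding \<chi>_def by (rule cj.char_poly_hom[OF Pc])
        finally show ?thesis by (simp add: bar_poly_def)
      qed
      ultimately show "\<chi> = Polynomial.smult (\<epsilon> ^ n) (pcompose (bar_poly cj \<chi>) [:0, \<epsilon>:])" by simp
    next
      show "\<epsilon> = -1 \<longrightarrow> \<chi> \<notin> {monom 1 (2 * k) | k. k \<ge> 1}"
      proof (intro impI notI)
        assume em: "\<epsilon> = -1" and "\<chi> \<in> {monom 1 (2 * k) | k. k \<ge> 1}"
        then obtain m where cm: "\<chi> = monom 1 (2*m)" "m \<ge> 1" by auto
        have nm: "n = 2*m" using dm(1) cm by (simp add: degree_monom_eq)
        have g0: "g i = 0" if "i < n" for i using that nm cm by (simp add: g_def coeff_monom)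
        have Phi0: "\<Phi> $$ (k, j) = (if k = j+1 then 1 else 0)" if "k < n" "j < n" for k j
          using that by (simp add: Phi' g0)
        have sym: "X $$ (i,j) = X $$ (j,i)" if "i < n" "j < n" for i j
        proof -
          have "X $$ (i,j) = star_mat cj X $$ (i,j)" by (simp only: X(3)[symmetric])
          also have "\<dots> = X $$ (j,i)" using that X(1) by (simp add: star_mat_def cjid[OF em])
          finally show ?thesis .
        qed
        have XPe: "(X * \<Phi>) $$ (i,j) = (if j+1 < n then X $$ (i,j+1) else 0)" if ij: "i < n" "j < n" for i j
        proof -
          have "(X * \<Phi>) $$ (i,j) = (\<Sum>k\<in>{0..<n}. X $$ (i,k) * \<Phi> $$ (k,j))"
            using ij X(1) Pc by (simp add: scalar_prod_def)
          also have "\<dots> = (\<Sum>k\<in>{0..<n}. X $$ (i,k) * (if k = j+1 then 1 else 0))"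
            using ij by (intro sum.cong, auto simp: Phi0)
          also have "\<dots> = (if j+1 < n then X $$ (i,j+1) else 0)"
          proof (cases "j+1 < n")
            case True
            then show ?thesis by (subst sum_single[of "j+1"], auto)
          next
            case False
            then have "\<forall>k\<in>{0..<n}. X $$ (i,k) * (if k = j+1 then 1 else 0) = 0" by auto
            then show ?thesis using False by simp
          qed
          finally show ?thesis .
        qed
        have skew: "(X * \<Phi>) $$ (i,j) = - (X * \<Phi>) $$ (j,i)" if "i < n" "j < n" for i j
        proof -
          have "(X * \<Phi>) $$ (i,j) = (\<epsilon> \<cdot>\<^sub>m star_mat cj (X * \<Phi>)) $$ (i,j)" by (simp only: X(4)[symmetric])
          also have "\<dots> = - (X * \<Phi>) $$ (j,i)" using that X(1) Pc em
            by (simp add: star_mat_def cjid[OF em] del: index_mult_mat(1))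
          finally show ?thesis .
        qed
        have L1: "X $$ (i,j+1) = - X $$ (j,i+1)" if "i+1 < n" "j+1 < n" for i j
          using skew[of i j] XPe[of i j] XPe[of j i] that by simp
        have chain: "t \<le> n - 1 \<Longrightarrow> X $$ (n-1-t, t) = (-1)^t * X $$ (n-1, 0)" for t
        proof (induction t)
          case (Suc t)
          have "X $$ (n-1-Suc t, Suc t) = - X $$ (t, n-1-Suc t+1)"
            using L1[of "n-1-Suc t" t] Suc.prems by simp
          also have "n-1-Suc t+1 = n-1-t" using Suc.prems by simp
          also have "X $$ (t, n-1-t) = X $$ (n-1-t, t)" using sym[of t "n-1-t"] Suc.prems by simp
          finally show ?case using Suc by simp
        qed simp
        have c1: "X $$ (0, n-1) = (-1)^(n-1) * X $$ (n-1, 0)" using chain[of "n-1"] by simp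
        have o: "odd (n-1)" using nm cm(2) by presburger
        have pw: "(-1::'a)^(n-1) = -1" using o by simp
        have s0: "X $$ (n-1, 0) = X $$ (0, n-1)" by (rule sym, insert n1, auto)
        also have "\<dots> = - X $$ (n-1, 0)" unfolding c1 pw by simp
        finally have "X $$ (n-1, 0) = - X $$ (n-1, 0)" .
        then have "X $$ (n-1, 0) + X $$ (n-1, 0) = 0" by (metis eq_neg_iff_add_eq_0)
        then have "2 * X $$ (n-1, 0) = 0" by (metis mult_2)
        then have x0: "X $$ (n-1, 0) = 0" using char by (metis mult_eq_0_iff)
        have xr: "X $$ (n-1, j) = 0" if "j < n" for j
        proof (cases "j = 0")
          case True then show ?thesis using x0 by simp
        next
          case False
          then have "X $$ (n-1, j) = (X * \<Phi>) $$ (n-1, j-1)" using XPe[of "n-1" "j-1"] that n1 by simp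
          also have "\<dots> = - (X * \<Phi>) $$ (j-1, n-1)" using skew[of "n-1" "j-1"] that n1 by simp
          also have "\<dots> = 0" using XPe[of "j-1" "n-1"] that n1 by simp
          finally show ?thesis .
        qed
        have "X *\<^sub>v unit_vec n (n-1) = 0\<^sub>v n"
        proof (rule eq_vecI)
          fix i assume "i < dim_vec (0\<^sub>v n :: 'a vec)"
          then have i: "i < n" by simp
          have "(X *\<^sub>v unit_vec n (n-1)) $ i = X $$ (i, n-1)" using i X(1) n1 by simp
          also have "\<dots> = 0" using sym[of i "n-1"] xr[of i] i n1 by simp
          finally show "(X *\<^sub>v unit_vec n (n-1)) $ i = 0\<^sub>v n $ i" using i by simp
        qed (insert X(1), simp)
        moreover have "unit_vec n (n-1) \<noteq> (0\<^sub>v n :: 'a vec)"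
        proof
          assume "unit_vec n (n-1) = (0\<^sub>v n :: 'a vec)"
          then have "unit_vec n (n-1) $ (n-1) = (0\<^sub>v n :: 'a vec) $ (n-1)" by simp
          then show False using n1 by simp
        qed
        ultimately have "det X = 0" unfolding det_0_iff_vec_prod_zero_field[OF X(1)]
          by (intro exI[of _ "unit_vec n (n-1)"], auto)
        then show False using X(2) by simp
      qed
    qed
  next
    assume B: "\<chi> = Polynomial.smult (\<epsilon> ^ n) (pcompose (bar_poly cj \<chi>) [:0, \<epsilon>:])
               \<and> (\<epsilon> = -1 \<longrightarrow> \<chi> \<notin> {monom 1 (2 * k) | k. k \<ge> 1})"
    define f where "f s = (if det \<Phi> \<noteq> 0 then (if s = 2 then 1 else 0) else (if s = n + 1 then 1 else (0::'a)))" for s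
    define a where "a = recseq n g f"
    have ra: "recurrent \<chi> a 2 (2 * n)" unfolding recurrent_conv[OF dm(1)] a_def g_def[symmetric]
      using recseq_rec[of g n, OF gn] by auto
    have ia: "\<forall>i \<in> {2..n+1}. a i = (if det \<Phi> \<noteq> 0 then (if i = 2 then 1 else 0)
                                                       else (if i = n + 1 then 1 else 0))"
      by (auto simp: a_def recseq_init f_def)
    let ?X = "mat n n (\<lambda>(i, j). \<epsilon> ^ (i + 1) * a (i + j + 2))"
    have "det ?X \<noteq> 0 \<and> ?X = star_mat cj ?X \<and> ?X * \<Phi> = \<epsilon> \<cdot>\<^sub>m star_mat cj (?X * \<Phi>)"
      using part2'[OF B ra ia] unfolding Let_def .
    then show "\<exists>X \<in> carrier_mat n n. det X \<noteq> 0 \<and> X = star_mat cj X \<and> X * \<Phi> = \<epsilon> \<cdot>\<^sub>m star_mat cj (X * \<Phi>)"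
      by (intro bexI[of _ ?X], auto)
  qed
  show ?thesis unfolding \<chi>_def[symmetric]
  proof (intro conjI impI allI)
    fix a assume B: "\<chi> = Polynomial.smult (\<epsilon> ^ n) (pcompose (bar_poly cj \<chi>) [:0, \<epsilon>:])
               \<and> (\<epsilon> = -1 \<longrightarrow> \<chi> \<notin> {monom 1 (2 * k) | k. k \<ge> 1})"
      and RI: "recurrent \<chi> a 2 (2 * n)
                \<and> (\<forall>i \<in> {2..n+1}. a i = (if det \<Phi> \<noteq> 0 then (if i = 2 then 1 else 0)
                                                       else (if i = n + 1 then 1 else 0)))"
    show "let X = mat n n (\<lambda>(i, j). \<epsilon> ^ (i + 1) * a (i + j + 2)) in
                      det X \<noteq> 0 \<and> X = star_mat cj X \<and> X * \<Phi> = \<epsilon> \<cdot>\<^sub>m star_mat cj (X * \<Phi>)"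
      by (rule part2'[OF B conjunct1[OF RI] conjunct2[OF RI]])
  qed (rule iff)
qed

end
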